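(* Let $K$ be a field of characteristic $0$ and let $\mathcal{U}$ be the variety of $K$-algebras that are alternative and satisfy $(ab)c=(ba)c$. For $n\ge1$ let $U_n$ denote the multilinear component of degree $n$ of the free $\mathcal{U}$-algebra on $x_1,\dots,x_n$. Then a basis of $U_n$ is given by: \begin{itemize} \item $n=1$: $x_1$; \quad $n=2$: $x_1x_2,\ x_2x_1$; \item $n=3$: $(x_1x_2)x_3,\ (x_1x_3)x_2,\ x_3(x_1x_2),\ x_3(x_2x_1)$; \item $n\ge4$: the $n$ left-normed monomials $((\cdots((x_{i_1}x_{i_2})x_{i_3})\cdots)x_{i_{n-1}})x_k$, $k=1,\dots,n$, where $i_1<\cdots<i_{n-1}$ is the increasing enumeration of $\{1,\dots,n\}\setminus\{k\}$. \end{itemize}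
   Context: An algebra is alternative if $(a,a,b)=0=(a,b,b)$ for all $a,b$, where $(a,b,c)=(ab)c-a(bc)$. This variety $\mathcal{U}$ is the Koszul dual (Ginzburg–Kapranov) of the variety $\mathcal{LS}_{\mathfrak{A}_2}$ of left-symmetric algebras (those with $(a,b,c)=(b,a,c)$) satisfying additionally $a(bc)+b(ac)+a(cb)+c(ab)+b(ca)+c(ba)=0$. *)

theory Defs
  imports Main
begin

text \<open>Nonassociative monomials in variables x_i (i :: nat): binary trees.\<close>
datatype tree = Leaf nat | Node tree tree

fun leaves :: "tree \<Rightarrow> nat list" where
  "leaves (Leaf i) = [i]"
| "leaves (Node l r) = leaves l @ leaves r"

text \<open>Nonassociative polynomials over K: coefficient functions on monomials
  (finite support is imposed by the predicate ncpoly).\<close>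
type_synonym 'a npoly = "tree \<Rightarrow> 'a"

definition ncpoly :: "nat set \<Rightarrow> 'a::zero npoly \<Rightarrow> bool" where
  "ncpoly V p \<longleftrightarrow> finite {t. p t \<noteq> 0} \<and> (\<forall>t. p t \<noteq> 0 \<longrightarrow> set (leaves t) \<subseteq> V)"

definition padd :: "'a::ring npoly \<Rightarrow> 'a npoly \<Rightarrow> 'a npoly" where
  "padd p q = (\<lambda>t. p t + q t)"

definition pminus :: "'a::ring npoly \<Rightarrow> 'a npoly \<Rightarrow> 'a npoly" where
  "pminus p q = (\<lambda>t. p t - q t)"

definition psmul :: "'a::ring \<Rightarrow> 'a npoly \<Rightarrow> 'a npoly" where
  "psmul c p = (\<lambda>t. c * p t)"

definition pmul :: "'a::ring npoly \<Rightarrow> 'a npoly \<Rightarrow> 'a npoly" where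
  "pmul p q = (\<lambda>t. case t of Leaf _ \<Rightarrow> 0 | Node l r \<Rightarrow> p l * q r)"

definition monom :: "tree \<Rightarrow> 'a::ring_1 npoly" where
  "monom t = (\<lambda>s. if s = t then 1 else 0)"

definition assoc :: "'a::ring npoly \<Rightarrow> 'a npoly \<Rightarrow> 'a npoly \<Rightarrow> 'a npoly" where
  "assoc p q r = pminus (pmul (pmul p q) r) (pmul p (pmul q r))"

text \<open>The verbal (T-)ideal of the free nonassociative algebra on the variables V
  defining the variety U: the ideal generated by all values (a,a,b), (a,b,b),
  (ab)c-(ba)c on elements a,b,c of the free algebra.\<close>
inductive_set Uideal :: "nat set \<Rightarrow> 'a::field npoly set" for V where
  alt_left: "ncpoly V a \<Longrightarrow> ncpoly V b \<Longrightarrow> assoc a a b \<in> Uideal V"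
| alt_right: "ncpoly V a \<Longrightarrow> ncpoly V b \<Longrightarrow> assoc a b b \<in> Uideal V"
| comm_left: "ncpoly V a \<Longrightarrow> ncpoly V b \<Longrightarrow> ncpoly V c \<Longrightarrow>
     pminus (pmul (pmul a b) c) (pmul (pmul b a) c) \<in> Uideal V"
| zero: "(\<lambda>t. 0) \<in> Uideal V"
| add: "p \<in> Uideal V \<Longrightarrow> q \<in> Uideal V \<Longrightarrow> padd p q \<in> Uideal V"
| smul: "p \<in> Uideal V \<Longrightarrow> psmul c p \<in> Uideal V"
| lmul: "p \<in> Uideal V \<Longrightarrow> ncpoly V r \<Longrightarrow> pmul r p \<in> Uideal V"
| rmul: "p \<in> Uideal V \<Longrightarrow> ncpoly V r \<Longrightarrow> pmul p r \<in> Uideal V"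

definition multilinear :: "nat \<Rightarrow> tree \<Rightarrow> bool" where
  "multilinear n t \<longleftrightarrow> distinct (leaves t) \<and> set (leaves t) = {1..n}"

definition lin_comb :: "(nat \<Rightarrow> 'a::ring) \<Rightarrow> tree list \<Rightarrow> 'a npoly" where
  "lin_comb c B = (\<lambda>t. \<Sum>j<length B. if B ! j = t then c j else 0)"

fun lnorm :: "nat list \<Rightarrow> tree" where
  "lnorm [] = Leaf 0"
| "lnorm (x # xs) = foldl (\<lambda>t i. Node t (Leaf i)) (Leaf x) xs"

definition basisU :: "nat \<Rightarrow> tree list" where
  "basisU n =
    (if n = 1 then [Leaf 1]
     else if n = 2 then [Node (Leaf 1) (Leaf 2), Node (Leaf 2) (Leaf 1)]
     else if n = 3 then [Node (Node (Leaf 1) (Leaf 2)) (Leaf 3),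
                         Node (Node (Leaf 1) (Leaf 3)) (Leaf 2),
                         Node (Leaf 3) (Node (Leaf 1) (Leaf 2)),
                         Node (Leaf 3) (Node (Leaf 2) (Leaf 1))]
     else map (\<lambda>k. lnorm (filter (\<lambda>i. i \<noteq> k) [1..<n+1] @ [k])) [1..<n+1])"

end

theory Submission imports Defs "HOL-Library.Product_Plus" "HOL-Library.Multiset" begin

lemma ncpoly_zero[simp]: "ncpoly V (\<lambda>t. 0)" by (simp add: ncpoly_def)

lemma ncpoly_padd[intro]: "ncpoly V p \<Longrightarrow> ncpoly V q \<Longrightarrow> ncpoly V (padd p q)"
proof -
  assume p: "ncpoly V p" and q: "ncpoly V q"
  have s: "{t. padd p q t \<noteq> 0} \<subseteq> {t. p t \<noteq> 0} \<union> {t. q t \<noteq> 0}" by (auto simp: padd_def)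
  show ?thesis unfolding ncpoly_def
  proof (intro conjI allI impI)
    show "finite {t. padd p q t \<noteq> 0}" using p q by (intro finite_subset[OF s]) (auto simp: ncpoly_def)
  next
    fix t assume "padd p q t \<noteq> 0"
    then have "p t \<noteq> 0 \<or> q t \<noteq> 0" by (auto simp: padd_def)
    then show "set (leaves t) \<subseteq> V" using p q by (auto simp: ncpoly_def)
  qed
qed

lemma ncpoly_psmul[intro]: "ncpoly V p \<Longrightarrow> ncpoly V (psmul c p)"
proof -
  assume p: "ncpoly V p"
  have s: "{t. psmul c p t \<noteq> 0} \<subseteq> {t. p t \<noteq> 0}" by (auto simp: psmul_def)
  show ?thesis unfolding ncpoly_def
  proof (intro conjI allI impI)
    show "finite {t. psmul c p t \<noteq> 0}" using p by (intro finite_subset[OF s]) (auto simp: ncpoly_def)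
  next
    fix t assume "psmul c p t \<noteq> 0"
    then have "p t \<noteq> 0" by (auto simp: psmul_def)
    then show "set (leaves t) \<subseteq> V" using p by (auto simp: ncpoly_def)
  qed
qed

lemma pminus_eq: "pminus (p::'a::ring_1 npoly) q = padd p (psmul (-1) q)"
  by (simp add: pminus_def padd_def psmul_def fun_eq_iff)

lemma ncpoly_pminus[intro]: "ncpoly V (p::'a::ring_1 npoly) \<Longrightarrow> ncpoly V q \<Longrightarrow> ncpoly V (pminus p q)"
  unfolding pminus_eq by auto

lemma ncpoly_pmul[intro]: "ncpoly V p \<Longrightarrow> ncpoly V q \<Longrightarrow> ncpoly V (pmul p q)"
proof -
  assume p: "ncpoly V p" and q: "ncpoly V q"
  have sub: "{t. pmul p q t \<noteq> 0} \<subseteq> (\<lambda>(l,r). Node l r) ` ({t. p t \<noteq> 0} \<times> {t. q t \<noteq> 0})"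
  proof
    fix t assume "t \<in> {t. pmul p q t \<noteq> 0}"
    then show "t \<in> (\<lambda>(l,r). Node l r) ` ({t. p t \<noteq> 0} \<times> {t. q t \<noteq> 0})"
      by (cases t) (auto simp: pmul_def)
  qed
  show ?thesis unfolding ncpoly_def
  proof (intro conjI allI impI)
    show "finite {t. pmul p q t \<noteq> 0}"
      using p q by (intro finite_subset[OF sub]) (auto simp: ncpoly_def)
  next
    fix t assume nz: "pmul p q t \<noteq> 0"
    then obtain l r where t: "t = Node l r" and pr: "p l * q r \<noteq> 0"
      by (cases t) (auto simp: pmul_def)
    from pr have "p l \<noteq> 0" "q r \<noteq> 0" by auto
    then show "set (leaves t) \<subseteq> V" using p q t by (auto simp: ncpoly_def)
  qed
qed

lemma ncpoly_monom[intro]: "set (leaves t) \<subseteq> V \<Longrightarrow> ncpoly V (monom t)"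
  by (simp add: ncpoly_def monom_def)

lemma ncpoly_assoc[intro]: "ncpoly V (a::'a::ring_1 npoly) \<Longrightarrow> ncpoly V b \<Longrightarrow> ncpoly V c \<Longrightarrow> ncpoly V (assoc a b c)"
  unfolding assoc_def by auto

lemma pmul_padd_l: "pmul (padd p q) r = padd (pmul p r) (pmul q r)"
  by (auto simp: fun_eq_iff pmul_def padd_def algebra_simps split: tree.split)
lemma pmul_padd_r: "pmul r (padd p q) = padd (pmul r p) (pmul r q)"
  by (auto simp: fun_eq_iff pmul_def padd_def algebra_simps split: tree.split)
lemma pmul_pminus_l: "pmul (pminus p q) r = pminus (pmul p r) (pmul q r)"
  by (auto simp: fun_eq_iff pmul_def pminus_def algebra_simps split: tree.split)
lemma pmul_pminus_r: "pmul r (pminus p q) = pminus (pmul r p) (pmul r q)"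
  by (auto simp: fun_eq_iff pmul_def pminus_def algebra_simps split: tree.split)
lemma pmul_psmul_l: "pmul (psmul c p) r = psmul c (pmul p r)"
  by (auto simp: fun_eq_iff pmul_def psmul_def algebra_simps split: tree.split)
lemma pmul_psmul_r: "pmul r (psmul (c::'a::comm_ring) p) = psmul c (pmul r p)"
  by (auto simp: fun_eq_iff pmul_def psmul_def algebra_simps split: tree.split)
lemma pmul_monom: "pmul (monom a) (monom b) = (monom (Node a b) :: 'a::ring_1 npoly)"
  by (auto simp: fun_eq_iff pmul_def monom_def split: tree.split)

lemmas pdist = pmul_padd_l pmul_padd_r pmul_pminus_l pmul_pminus_r pmul_psmul_l pmul_psmul_r

definition comm :: "'a::ring npoly \<Rightarrow> 'a npoly \<Rightarrow> 'a npoly" where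
  "comm p q = pminus (pmul p q) (pmul q p)"

lemma ncpoly_comm[intro]: "ncpoly V (a::'a::ring_1 npoly) \<Longrightarrow> ncpoly V b \<Longrightarrow> ncpoly V (comm a b)"
  unfolding comm_def by auto


lemma I_zero: "p = (\<lambda>t. 0) \<Longrightarrow> p \<in> Uideal V"
  using Uideal.zero by auto
lemma I_add: "p \<in> Uideal V \<Longrightarrow> q \<in> Uideal V \<Longrightarrow> padd p q \<in> Uideal V"
  by (rule Uideal.add)
lemma I_smul: "p \<in> Uideal V \<Longrightarrow> psmul c p \<in> Uideal V"
  by (rule Uideal.smul)
lemma I_minus: "p \<in> Uideal V \<Longrightarrow> q \<in> Uideal V \<Longrightarrow> pminus p q \<in> Uideal V"
  unfolding pminus_eq by (intro I_add I_smul)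
lemma I_lmul: "p \<in> Uideal V \<Longrightarrow> ncpoly V r \<Longrightarrow> pmul r p \<in> Uideal V"
  by (rule Uideal.lmul)
lemma I_rmul: "p \<in> Uideal V \<Longrightarrow> ncpoly V r \<Longrightarrow> pmul p r \<in> Uideal V"
  by (rule Uideal.rmul)
lemma I_eq: "p \<in> Uideal V \<Longrightarrow> p = q \<Longrightarrow> q \<in> Uideal V" by simp

lemma I_nc: "p \<in> Uideal V \<Longrightarrow> ncpoly V p"
  by (induction rule: Uideal.induct) auto

section \<open>Derivations\<close>

context fixes V :: "nat set" begin

lemma L1: assumes "ncpoly V a" "ncpoly V b" "ncpoly V c"
  shows "padd (assoc a b c) (assoc b a c) \<in> (Uideal V :: 'a::field npoly set)"
proof -
  have "pminus (pminus (assoc (padd a b) (padd a b) c) (assoc a a c)) (assoc b b c) \<in> (Uideal V :: 'a npoly set)"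
    using assms by (intro I_minus Uideal.alt_left) auto
  moreover have "pminus (pminus (assoc (padd a b) (padd a b) c) (assoc a a c)) (assoc b b c) = padd (assoc a b c) (assoc b a c)"
    by (simp only: assoc_def comm_def pdist) (simp add: fun_eq_iff padd_def pminus_def psmul_def)
  ultimately show ?thesis by simp
qed

lemma L2: assumes "ncpoly V a" "ncpoly V b" "ncpoly V c"
  shows "padd (assoc a b c) (assoc a c b) \<in> (Uideal V :: 'a::field npoly set)"
proof -
  have "pminus (pminus (assoc a (padd b c) (padd b c)) (assoc a b b)) (assoc a c c) \<in> (Uideal V :: 'a npoly set)"
    using assms by (intro I_minus Uideal.alt_right) auto
  moreover have "pminus (pminus (assoc a (padd b c) (padd b c)) (assoc a b b)) (assoc a c c) = padd (assoc a b c) (assoc a c b)"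
    by (simp only: assoc_def comm_def pdist) (simp add: fun_eq_iff padd_def pminus_def psmul_def)
  ultimately show ?thesis by simp
qed

lemma L3: assumes "ncpoly V a" "ncpoly V b" "ncpoly V c"
  shows "pmul (comm a b) c \<in> (Uideal V :: 'a::field npoly set)"
  using Uideal.comm_left[OF assms] by (simp add: comm_def pdist)


lemma D1: assumes "ncpoly V a" "ncpoly V b" "ncpoly V c"
  shows "pminus (assoc a b c) (assoc b c a) \<in> (Uideal V :: 'a::field npoly set)"
proof -
  have "pminus (padd (assoc a b c) (assoc b a c)) (padd (assoc b a c) (assoc b c a)) \<in> (Uideal V :: 'a npoly set)"
    using assms by (intro I_minus L1 L2)
  moreover have "pminus (padd (assoc a b c) (assoc b a c)) (padd (assoc b a c) (assoc b c a)) = pminus (assoc a b c) (assoc b c a)"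
    by (simp only: assoc_def comm_def pdist) (simp add: fun_eq_iff padd_def pminus_def psmul_def algebra_simps)
  ultimately show ?thesis by simp
qed

lemma D2: assumes "ncpoly V a" "ncpoly V b" "ncpoly V c"
  shows "padd (pminus (pmul a (pmul b c)) (pmul b (pmul a c))) (psmul 2 (assoc a b c)) \<in> (Uideal V :: 'a::field npoly set)"
proof -
  have "padd (pmul (comm a b) c) (padd (assoc a b c) (assoc b a c)) \<in> (Uideal V :: 'a npoly set)"
    using assms by (intro I_add L1 L3)
  moreover have "padd (pmul (comm a b) c) (padd (assoc a b c) (assoc b a c)) = padd (pminus (pmul a (pmul b c)) (pmul b (pmul a c))) (psmul 2 (assoc a b c))"
    by (simp only: assoc_def comm_def pdist) (simp add: fun_eq_iff padd_def pminus_def psmul_def algebra_simps)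
  ultimately show ?thesis by simp
qed

definition S3 :: "'a::ring npoly \<Rightarrow> 'a npoly \<Rightarrow> 'a npoly \<Rightarrow> 'a npoly" where
  "S3 x y z = padd (padd (pmul x (comm y z)) (pmul y (comm z x))) (pmul z (comm x y))"

lemma D3: assumes "ncpoly V x" "ncpoly V y" "ncpoly V z"
  shows "padd (S3 x y z) (psmul 6 (assoc x y z)) \<in> (Uideal V :: 'a::field npoly set)"
proof -
  let ?E = "padd (padd (padd (padd
     (padd (pminus (pmul x (pmul y z)) (pmul y (pmul x z))) (psmul 2 (assoc x y z)))
     (padd (pminus (pmul z (pmul x y)) (pmul x (pmul z y))) (psmul 2 (assoc z x y))))
     (padd (pminus (pmul y (pmul z x)) (pmul z (pmul y x))) (psmul 2 (assoc y z x))))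
     (psmul (-2) (pminus (assoc z x y) (assoc x y z))))
     (psmul 2 (pminus (assoc x y z) (assoc y z x)))"
  have "?E \<in> (Uideal V :: 'a npoly set)"
    using assms by (intro I_add I_smul D1 D2)
  moreover have "?E = padd (S3 x y z) (psmul 6 (assoc x y z))"
    unfolding S3_def by (simp only: assoc_def comm_def pdist) (simp add: fun_eq_iff padd_def pminus_def psmul_def algebra_simps)
  ultimately show ?thesis by simp
qed

lemma K1: assumes "ncpoly V x" "ncpoly V y" "ncpoly V z" "ncpoly V w"
  shows "pmul (pmul x (comm y z)) w \<in> (Uideal V :: 'a::field npoly set)"
proof -
  have "padd (pmul (comm x (comm y z)) w) (pmul (pmul (comm y z) x) w) \<in> (Uideal V :: 'a npoly set)"
    using assms by (intro I_add L3 I_rmul) auto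
  moreover have "padd (pmul (comm x (comm y z)) w) (pmul (pmul (comm y z) x) w) = pmul (pmul x (comm y z)) w"
    by (simp only: assoc_def comm_def pdist) (simp add: fun_eq_iff padd_def pminus_def psmul_def algebra_simps)
  ultimately show ?thesis by simp
qed

lemma D4: assumes "ncpoly V x" "ncpoly V y" "ncpoly V z" "ncpoly V w"
  shows "pmul (assoc x y z) w \<in> (Uideal V :: 'a::field_char_0 npoly set)"
proof -
  let ?E = "pminus (pmul (padd (S3 x y z) (psmul 6 (assoc x y z))) w)
      (padd (padd (pmul (pmul x (comm y z)) w) (pmul (pmul y (comm z x)) w)) (pmul (pmul z (comm x y)) w))"
  have "?E \<in> (Uideal V :: 'a npoly set)"
    using assms by (intro I_minus I_add I_rmul D3 K1) auto
  moreover have "?E = psmul 6 (pmul (assoc x y z) w)"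
    unfolding S3_def by (simp only: assoc_def comm_def pdist) (simp add: fun_eq_iff padd_def pminus_def psmul_def algebra_simps)
  ultimately have "psmul (1/6) (psmul 6 (pmul (assoc x y z) w)) \<in> (Uideal V :: 'a npoly set)"
    by (simp add: I_smul)
  moreover have "psmul (1/6) (psmul 6 (pmul (assoc x y z) w)) = (pmul (assoc x y z) w :: 'a npoly)"
    by (simp add: psmul_def fun_eq_iff)
  ultimately show ?thesis by simp
qed

lemma D5: assumes "ncpoly V p" "ncpoly V q" "ncpoly V r" "ncpoly V s"
  shows "pminus (assoc (pmul p q) r s) (assoc (pmul q p) r s) \<in> (Uideal V :: 'a::field npoly set)"
proof -
  have "pminus (pmul (pmul (comm p q) r) s) (pmul (comm p q) (pmul r s)) \<in> (Uideal V :: 'a npoly set)"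
    using assms by (intro I_minus L3 I_rmul) auto
  moreover have "pminus (pmul (pmul (comm p q) r) s) (pmul (comm p q) (pmul r s)) = pminus (assoc (pmul p q) r s) (assoc (pmul q p) r s)"
    by (simp only: assoc_def comm_def pdist) (simp add: fun_eq_iff padd_def pminus_def psmul_def algebra_simps)
  ultimately show ?thesis by simp
qed


definition Tc :: "'a::ring npoly \<Rightarrow> 'a npoly \<Rightarrow> 'a npoly \<Rightarrow> 'a npoly \<Rightarrow> 'a npoly" where
  "Tc a b c d = pminus (padd (padd (assoc (pmul a b) c d) (assoc (pmul b c) a d)) (assoc (pmul c d) a b)) (pmul a (assoc b c d))"

lemma TcI: assumes "ncpoly V a" "ncpoly V b" "ncpoly V c" "ncpoly V d"
  shows "Tc a b c d \<in> (Uideal V :: 'a::field_char_0 npoly set)"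
proof -
  let ?E = "pminus (padd (pmul (assoc a b c) d) (padd (assoc a (pmul b c) d) (assoc (pmul b c) a d)))
     (padd (pminus (assoc a b (pmul c d)) (assoc b (pmul c d) a)) (pminus (assoc b (pmul c d) a) (assoc (pmul c d) a b)))"
  have "?E \<in> (Uideal V :: 'a npoly set)"
    using assms by (intro I_minus I_add D4 L1 D1) auto
  moreover have "?E = Tc a b c d"
    unfolding Tc_def by (simp only: assoc_def comm_def pdist) (simp add: fun_eq_iff padd_def pminus_def psmul_def algebra_simps)
  ultimately show ?thesis by simp
qed

lemma D7: assumes x: "ncpoly V x" and y: "ncpoly V y" and z: "ncpoly V z" and w: "ncpoly V w"
  shows "assoc (pmul x y) z w \<in> (Uideal V :: 'a::field_char_0 npoly set)"
proof -
  let ?E = "padd (padd (pminus (pminus (pminus (pminus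
     (pminus (pminus (padd (Tc z w y x) (Tc w x z y)) (Tc z x w y)) (Tc w z y x))
     (pminus (assoc (pmul z w) y x) (assoc (pmul w z) y x)))
     (pminus (assoc (pmul w x) z y) (assoc (pmul x w) z y)))
     (pminus (assoc (pmul x z) w y) (assoc (pmul z x) w y)))
     (pmul z (pminus (assoc x w y) (assoc w y x))))
     (pmul w (pminus (assoc x z y) (assoc z y x))))
     (padd (assoc (pmul y x) z w) (assoc (pmul y x) w z))"
  have "?E \<in> (Uideal V :: 'a npoly set)"
    using assms by (intro I_minus I_add TcI D5 D1 L2 I_lmul) auto
  moreover have "?E = psmul 2 (assoc (pmul y x) z w)"
    unfolding Tc_def by (simp only: assoc_def comm_def pdist) (simp add: fun_eq_iff padd_def pminus_def psmul_def algebra_simps)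
  ultimately have "psmul (1/2) (psmul 2 (assoc (pmul y x) z w)) \<in> (Uideal V :: 'a npoly set)"
    by (simp add: I_smul)
  moreover have "psmul (1/2) (psmul 2 (assoc (pmul y x) z w)) = (assoc (pmul y x) z w :: 'a npoly)"
    by (simp add: psmul_def fun_eq_iff)
  ultimately have 1: "assoc (pmul y x) z w \<in> (Uideal V :: 'a npoly set)" by simp
  have "padd (assoc (pmul y x) z w) (pminus (assoc (pmul x y) z w) (assoc (pmul y x) z w)) \<in> (Uideal V :: 'a npoly set)"
    using assms by (intro I_add 1 D5)
  moreover have "padd (assoc (pmul y x) z w) (pminus (assoc (pmul x y) z w) (assoc (pmul y x) z w)) = (assoc (pmul x y) z w :: 'a npoly)"
    by (simp add: padd_def pminus_def fun_eq_iff)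
  ultimately show ?thesis by simp
qed

lemma D7b: assumes x: "ncpoly V x" and y: "ncpoly V y" and z: "ncpoly V z" and w: "ncpoly V w"
  shows "assoc x (pmul y z) w \<in> (Uideal V :: 'a::field_char_0 npoly set)"
proof -
  have "pminus (padd (assoc x (pmul y z) w) (assoc (pmul y z) x w)) (assoc (pmul y z) x w) \<in> (Uideal V :: 'a npoly set)"
    using assms by (intro I_minus L1 D7) auto
  moreover have "pminus (padd (assoc x (pmul y z) w) (assoc (pmul y z) x w)) (assoc (pmul y z) x w) = (assoc x (pmul y z) w :: 'a npoly)"
    by (simp add: padd_def pminus_def fun_eq_iff)
  ultimately show ?thesis by simp
qed

lemma D7c: assumes x: "ncpoly V x" and y: "ncpoly V y" and z: "ncpoly V z" and w: "ncpoly V w"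
  shows "assoc x y (pmul z w) \<in> (Uideal V :: 'a::field_char_0 npoly set)"
proof -
  have "padd (padd (pminus (assoc x y (pmul z w)) (assoc y (pmul z w) x)) (pminus (assoc y (pmul z w) x) (assoc (pmul z w) x y))) (assoc (pmul z w) x y) \<in> (Uideal V :: 'a npoly set)"
    using assms by (intro I_add D1 D7) auto
  moreover have "padd (padd (pminus (assoc x y (pmul z w)) (assoc y (pmul z w) x)) (pminus (assoc y (pmul z w) x) (assoc (pmul z w) x y))) (assoc (pmul z w) x y) = (assoc x y (pmul z w) :: 'a npoly)"
    by (simp add: padd_def pminus_def fun_eq_iff)
  ultimately show ?thesis by simp
qed

lemma ID4: assumes "ncpoly V a" "ncpoly V b" "ncpoly V c" "ncpoly V d"
  shows "pminus (pmul (pmul (pmul a b) c) d) (pmul (pmul (pmul a c) b) d) \<in> (Uideal V :: 'a::field_char_0 npoly set)"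
proof -
  let ?E = "padd (pminus (pmul (assoc a b c) d) (pmul (assoc a c b) d)) (pmul (pmul a (comm b c)) d)"
  have "?E \<in> (Uideal V :: 'a npoly set)"
    using assms by (intro I_minus I_add D4 K1) auto
  moreover have "?E = pminus (pmul (pmul (pmul a b) c) d) (pmul (pmul (pmul a c) b) d)"
    by (simp only: assoc_def comm_def pdist) (simp add: fun_eq_iff padd_def pminus_def psmul_def algebra_simps)
  ultimately show ?thesis by simp
qed

end


abbreviation teq :: "'a::field_char_0 itself \<Rightarrow> nat set \<Rightarrow> tree \<Rightarrow> tree \<Rightarrow> bool" where
  "teq T V t s \<equiv> (pminus (monom t) (monom s) :: 'a npoly) \<in> Uideal V"

lemma teq_refl: "teq TYPE('a::field_char_0) V t t"
  by (rule I_zero) (simp add: pminus_def fun_eq_iff)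

lemma teq_sym: "teq TYPE('a::field_char_0) V t s \<Longrightarrow> teq TYPE('a) V s t"
  by (drule I_smul[where c="-1"]) (simp add: pminus_def psmul_def fun_eq_iff)

lemma teq_trans: "teq TYPE('a::field_char_0) V t s \<Longrightarrow> teq TYPE('a) V s u \<Longrightarrow> teq TYPE('a) V t u"
  by (drule (1) I_add) (simp add: pminus_def padd_def fun_eq_iff)

lemma teq_nodeL: "teq TYPE('a::field_char_0) V l l' \<Longrightarrow> set (leaves r) \<subseteq> V \<Longrightarrow> teq TYPE('a) V (Node l r) (Node l' r)"
  by (drule I_rmul[where r="monom r"]) (auto simp: pdist pmul_monom)

lemma teq_nodeR: "teq TYPE('a::field_char_0) V r r' \<Longrightarrow> set (leaves l) \<subseteq> V \<Longrightarrow> teq TYPE('a) V (Node l r) (Node l r')"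
  by (drule I_lmul[where r="monom l"]) (auto simp: pdist pmul_monom)

definition lw :: "tree \<Rightarrow> nat list \<Rightarrow> tree" where
  "lw t xs = foldl (\<lambda>t i. Node t (Leaf i)) t xs"

lemma lw_Nil[simp]: "lw t [] = t" by (simp add: lw_def)
lemma lw_Cons[simp]: "lw t (x # xs) = lw (Node t (Leaf x)) xs" by (simp add: lw_def)
lemma lw_append: "lw t (xs @ ys) = lw (lw t xs) ys" by (simp add: lw_def)
lemma lnorm_lw[simp]: "lnorm (x # xs) = lw (Leaf x) xs" by (simp add: lw_def)
declare lnorm.simps(2)[simp del]
lemma leaves_lw[simp]: "leaves (lw t xs) = leaves t @ xs"
  by (induction xs arbitrary: t) auto
lemma leaves_lnorm[simp]: "xs \<noteq> [] \<Longrightarrow> leaves (lnorm xs) = xs"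
  by (cases xs) (auto simp: lnorm_lw)
lemma lnorm_snoc: "xs \<noteq> [] \<Longrightarrow> lnorm (xs @ [k]) = Node (lnorm xs) (Leaf k)"
  by (cases xs) (auto simp: lnorm_lw lw_append)

lemma teq_lw: "teq TYPE('a::field_char_0) V s s' \<Longrightarrow> set q \<subseteq> V \<Longrightarrow> teq TYPE('a) V (lw s q) (lw s' q)"
proof (induction q arbitrary: s s')
  case Nil then show ?case by simp
next
  case (Cons x q)
  have "teq TYPE('a) V (Node s (Leaf x)) (Node s' (Leaf x))"
    using Cons by (intro teq_nodeL) auto
  then show ?case using Cons by simp
qed

lemma ncm: "set (leaves t) \<subseteq> V \<Longrightarrow> ncpoly V (monom t :: 'a::field npoly)"
  by (rule ncpoly_monom)

lemma monom_node: "monom (Node a b) = (pmul (monom a) (monom b) :: 'a::ring_1 npoly)"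
  by (simp add: pmul_monom)

lemma T_comm: assumes "set (leaves a) \<subseteq> V" "set (leaves b) \<subseteq> V" "set (leaves c) \<subseteq> V"
  shows "teq TYPE('a::field_char_0) V (Node (Node a b) c) (Node (Node b a) c)"
  using L3[OF ncm ncm ncm, OF assms, where 'a='a]
  by (simp add: comm_def pdist pmul_monom)

lemma T_ID4: assumes "set (leaves a) \<subseteq> V" "set (leaves b) \<subseteq> V" "set (leaves c) \<subseteq> V" "set (leaves d) \<subseteq> V"
  shows "teq TYPE('a::field_char_0) V (Node (Node (Node a b) c) d) (Node (Node (Node a c) b) d)"
  using ID4[OF ncm ncm ncm ncm, OF assms, where 'a='a]
  by (simp add: pmul_monom)

lemma T_ID5: assumes "set (leaves a) \<subseteq> V" "set (leaves b) \<subseteq> V" "set (leaves c) \<subseteq> V" "set (leaves d) \<subseteq> V"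
  shows "teq TYPE('a::field_char_0) V (Node (Node a (Node b c)) d) (Node (Node (Node a b) c) d)"
proof -
  have "teq TYPE('a) V (Node (Node (Node a b) c) d) (Node (Node a (Node b c)) d)"
    using D4[OF ncm ncm ncm ncm, OF assms, where 'a='a] by (simp add: assoc_def pdist pmul_monom)
  then show ?thesis by (rule teq_sym)
qed

lemma T_assoc: assumes "set (leaves x) \<subseteq> V" "set (leaves u) \<subseteq> V" "set (leaves v) \<subseteq> V"
  and "4 \<le> length (leaves x) + length (leaves u) + length (leaves v)"
  shows "teq TYPE('a::field_char_0) V (Node x (Node u v)) (Node (Node x u) v)"
proof -
  have "(assoc (monom x) (monom u) (monom v) :: 'a npoly) \<in> Uideal V"
  proof (cases x)
    case (Node x1 x2)
    then show ?thesis using assms D7[OF ncm ncm ncm ncm, of x1 V x2 u v, where 'a='a]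
      by (simp add: pmul_monom)
  next
    case (Leaf i)
    note xl = this
    show ?thesis
    proof (cases u)
      case (Node u1 u2)
      then show ?thesis using assms D7b[OF ncm ncm ncm ncm, of x V u1 u2 v, where 'a='a]
        by (simp add: pmul_monom)
    next
      case (Leaf j)
      then obtain v1 v2 where "v = Node v1 v2" using assms xl by (cases v) auto
      then show ?thesis using assms D7c[OF ncm ncm ncm ncm, of x V u v1 v2, where 'a='a]
        by (simp add: pmul_monom)
    qed
  qed
  then have "teq TYPE('a) V (Node (Node x u) v) (Node x (Node u v))" by (simp add: assoc_def pmul_monom)
  then show ?thesis by (rule teq_sym)
qed

lemma leaves_nonempty: "leaves t \<noteq> []"
  by (induction t) auto

lemma len_pos: "length (leaves t) \<ge> 1"
  using leaves_nonempty[of t] by (cases "leaves t") auto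

lemma leaves3: "length (leaves t) = 3 \<Longrightarrow>
   (\<exists>a b c. t = Node (Node (Leaf a) (Leaf b)) (Leaf c)) \<or> (\<exists>a b c. t = Node (Leaf a) (Node (Leaf b) (Leaf c)))"
proof (cases t)
  case (Leaf x) then show "length (leaves t) = 3 \<Longrightarrow> ?thesis" by simp
next
  case (Node l r)
  assume len: "length (leaves t) = 3"
  have l1: "length (leaves l) \<ge> 1" "length (leaves r) \<ge> 1"
    using leaves_nonempty[of l] leaves_nonempty[of r] by (auto simp: Suc_le_eq)
  have one: "length (leaves s) = 1 \<Longrightarrow> \<exists>a. s = Leaf a" for s
  proof (cases s)
    case (Node s1 s2)
    assume "length (leaves s) = 1"
    then have False using len_pos[of s1] len_pos[of s2] Node by simp
    then show ?thesis ..
  qed auto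
  have two: "length (leaves s) = 2 \<Longrightarrow> \<exists>a b. s = Node (Leaf a) (Leaf b)" for s
  proof (cases s)
    case (Node s1 s2)
    assume "length (leaves s) = 2"
    moreover have "length (leaves s1) \<ge> 1" "length (leaves s2) \<ge> 1"
      using leaves_nonempty[of s1] leaves_nonempty[of s2] by (auto simp: Suc_le_eq)
    ultimately have "length (leaves s1) = 1" "length (leaves s2) = 1" using Node by auto
    then show ?thesis using Node one by blast
  qed auto
  from len Node l1 have "(length (leaves l) = 2 \<and> length (leaves r) = 1) \<or> (length (leaves l) = 1 \<and> length (leaves r) = 2)"
    by auto
  then show ?thesis
  proof
    assume "length (leaves l) = 2 \<and> length (leaves r) = 1"
    then show ?thesis using one two Node by blast
  next
    assume "length (leaves l) = 1 \<and> length (leaves r) = 2"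
    then show ?thesis using one two Node by blast
  qed
qed

fun rw :: "tree \<Rightarrow> nat" where
  "rw (Leaf _) = 0"
| "rw (Node l r) = rw l + rw r + length (leaves r)"

lemma nf: "set (leaves t) \<subseteq> V \<Longrightarrow> 4 \<le> length (leaves t) \<Longrightarrow> teq TYPE('a::field_char_0) V t (lnorm (leaves t))"
proof (induction t rule: measure_induct_rule[of rw])
  case (less t)
  show ?case
  proof (cases t)
    case (Leaf x) then show ?thesis using less by simp
  next
    case (Node l r)
    note t = this
    show ?thesis
    proof (cases r)
      case (Leaf k)
      have lV: "set (leaves l) \<subseteq> V" and kV: "k \<in> V" using less t Leaf by auto
      have len: "length (leaves l) \<ge> 3" using less t Leaf by auto
      show ?thesis
      proof (cases "length (leaves l) \<ge> 4")
        case True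
        have "teq TYPE('a) V l (lnorm (leaves l))"
          using less.IH[of l] True lV t Leaf by simp
        then have "teq TYPE('a) V (Node l (Leaf k)) (Node (lnorm (leaves l)) (Leaf k))"
          using kV by (intro teq_nodeL) auto
        then show ?thesis using t Leaf lnorm_snoc[OF leaves_nonempty[of l], of k] by simp
      next
        case False
        then have "length (leaves l) = 3" using len by simp
        then show ?thesis
        proof (rule leaves3[THEN disjE])
          assume "\<exists>a b c. l = Node (Node (Leaf a) (Leaf b)) (Leaf c)"
          then obtain a b c where "l = Node (Node (Leaf a) (Leaf b)) (Leaf c)" by blast
          then show ?thesis using t Leaf teq_refl by (simp add: lnorm_lw)
        next
          assume "\<exists>a b c. l = Node (Leaf a) (Node (Leaf b) (Leaf c))"
          then obtain a b c where l: "l = Node (Leaf a) (Node (Leaf b) (Leaf c))" by blast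
          show ?thesis using t Leaf l T_ID5[of "Leaf a" V "Leaf b" "Leaf c" "Leaf k"] less(2)
            by (simp add: lnorm_lw)
        qed
      qed
    next
      case (Node u v)
      note r = this
      have V3: "set (leaves l) \<subseteq> V" "set (leaves u) \<subseteq> V" "set (leaves v) \<subseteq> V"
        using less t r by auto
      have 1: "teq TYPE('a) V t (Node (Node l u) v)"
        using T_assoc[OF V3] less t r by simp
      have rwl: "rw (Node (Node l u) v) < rw t"
        using t r leaves_nonempty[of v] by simp
      have 2: "teq TYPE('a) V (Node (Node l u) v) (lnorm (leaves (Node (Node l u) v)))"
        using less.IH[OF rwl] less t r by simp
      show ?thesis using teq_trans[OF 1 2] t r by simp
    qed
  qed
qed

lemma swap: assumes "set (u @ a # b # c # q) \<subseteq> V"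
  shows "teq TYPE('a::field_char_0) V (lnorm (u @ a # b # c # q)) (lnorm (u @ b # a # c # q))"
proof (cases u)
  case Nil
  have "teq TYPE('a) V (Node (Node (Leaf a) (Leaf b)) (Leaf c)) (Node (Node (Leaf b) (Leaf a)) (Leaf c))"
    using assms by (intro T_comm) auto
  then have "teq TYPE('a) V (lw (Node (Node (Leaf a) (Leaf b)) (Leaf c)) q) (lw (Node (Node (Leaf b) (Leaf a)) (Leaf c)) q)"
    using assms by (intro teq_lw) auto
  then show ?thesis using Nil by (simp add: lnorm_lw)
next
  case (Cons x u')
  let ?T = "lw (Leaf x) u'"
  have TV: "set (leaves ?T) \<subseteq> V" using assms Cons by auto
  have "teq TYPE('a) V (Node (Node (Node ?T (Leaf a)) (Leaf b)) (Leaf c)) (Node (Node (Node ?T (Leaf b)) (Leaf a)) (Leaf c))"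
    using assms TV by (intro T_ID4) auto
  then have "teq TYPE('a) V (lw (Node (Node (Node ?T (Leaf a)) (Leaf b)) (Leaf c)) q) (lw (Node (Node (Node ?T (Leaf b)) (Leaf a)) (Leaf c)) q)"
    using assms by (intro teq_lw) auto
  then show ?thesis using Cons by (simp add: lnorm_lw lw_append)
qed

lemma move: "q \<noteq> [] \<Longrightarrow> set (u @ a # v @ q) \<subseteq> V \<Longrightarrow>
   teq TYPE('a::field_char_0) V (lnorm (u @ a # v @ q)) (lnorm (u @ v @ a # q))"
proof (induction v arbitrary: u)
  case Nil then show ?case using teq_refl by simp
next
  case (Cons b v)
  obtain c q' where cq: "v @ q = c # q'" using Cons(2) by (cases "v @ q") auto
  have 1: "teq TYPE('a) V (lnorm (u @ a # b # c # q')) (lnorm (u @ b # a # c # q'))"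
    using Cons(3) cq by (intro swap) auto
  have 2: "teq TYPE('a) V (lnorm ((u @ [b]) @ a # v @ q)) (lnorm ((u @ [b]) @ v @ a # q))"
    using Cons by (intro Cons.IH) auto
  show ?case using teq_trans[OF 1] 2 cq by simp
qed

lemma perm_teq: "mset w = mset w' \<Longrightarrow> set w \<subseteq> V \<Longrightarrow> k \<in> V \<Longrightarrow>
   teq TYPE('a::field_char_0) V (lnorm (w @ [k])) (lnorm (w' @ [k]))"
proof (induction w arbitrary: w' k rule: rev_induct)
  case Nil
  then have "w' = []" by (cases w') auto
  then show ?case using teq_refl by simp
next
  case (snoc a w0)
  have "a \<in> set w'" using snoc(2) by (metis mset_eq_setD in_set_conv_decomp_first list.set_intros(1) set_append Un_iff)
  then obtain u v where w': "w' = u @ a # v" by (meson split_list)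
  have ms: "mset w0 = mset (u @ v)" using snoc(2) w' by simp
  have 1: "teq TYPE('a) V (lnorm (w0 @ [a, k])) (lnorm (u @ v @ [a, k]))"
  proof (cases "w0 = []")
    case True then show ?thesis using ms teq_refl by simp
  next
    case False
    have "teq TYPE('a) V (lnorm (w0 @ [a])) (lnorm ((u @ v) @ [a]))"
      using snoc by (intro snoc.IH ms) auto
    then have "teq TYPE('a) V (Node (lnorm (w0 @ [a])) (Leaf k)) (Node (lnorm ((u @ v) @ [a])) (Leaf k))"
      using snoc by (intro teq_nodeL) auto
    then show ?thesis using lnorm_snoc[of "w0 @ [a]" k] lnorm_snoc[of "u @ v @ [a]" k] by simp
  qed
  have "set (u @ v) = set w0" using ms by (metis mset_eq_setD)
  then have sV: "set (u @ a # v @ [k]) \<subseteq> V" using snoc by auto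
  have 2: "teq TYPE('a) V (lnorm (u @ a # v @ [k])) (lnorm (u @ v @ a # [k]))"
    using move[OF _ sV] by simp
  show ?case using teq_trans[OF 1 teq_sym[OF 2]] w' by simp
qed


lemma lin_comb_single: assumes "i < length B"
  shows "lin_comb (\<lambda>j. if j = i then 1 else 0) B = (monom (B ! i) :: 'a::ring_1 npoly)"
proof (rule ext)
  fix t
  have "(\<Sum>j<length B. if B ! j = t then (if j = i then 1 else 0) else (0::'a))
      = (\<Sum>j<length B. if j = i then (if B ! i = t then 1 else 0) else 0)"
    by (rule sum.cong) auto
  also have "\<dots> = (if B ! i = t then 1 else 0)" using assms by simp
  finally show "lin_comb (\<lambda>j. if j = i then 1 else 0) B t = (monom (B ! i) :: 'a npoly) t"
    by (simp add: lin_comb_def monom_def eq_commute)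
qed

definition basis3 :: "tree list" where
  "basis3 = [Node (Node (Leaf 1) (Leaf 2)) (Leaf 3),
             Node (Node (Leaf 1) (Leaf 3)) (Leaf 2),
             Node (Leaf 3) (Node (Leaf 1) (Leaf 2)),
             Node (Leaf 3) (Node (Leaf 2) (Leaf 1))]"

lemma basisU3: "basisU 3 = basis3" by (simp add: basisU_def basis3_def)

definition lc4 :: "'a::ring_1 \<Rightarrow> 'a \<Rightarrow> 'a \<Rightarrow> 'a \<Rightarrow> 'a npoly" where
  "lc4 a b c d = padd (padd (padd (psmul a (monom (Node (Node (Leaf 1) (Leaf 2)) (Leaf 3))))
     (psmul b (monom (Node (Node (Leaf 1) (Leaf 3)) (Leaf 2)))))
     (psmul c (monom (Node (Leaf 3) (Node (Leaf 1) (Leaf 2))))))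
     (psmul d (monom (Node (Leaf 3) (Node (Leaf 2) (Leaf 1)))))"


lemma sum4: "(\<Sum>j<4::nat. f j) = f 0 + f 1 + f 2 + (f 3 :: 'a::comm_monoid_add)"
  by (simp add: eval_nat_numeral add.assoc)

lemma lincomb3: "lin_comb c (basisU 3) = (lc4 (c 0) (c 1) (c 2) (c 3) :: 'a::ring_1 npoly)"
proof (rule ext)
  fix t
  have l4: "length basis3 = 4" by (simp add: basis3_def)
  have "lin_comb c (basisU 3) t = (\<Sum>j<4::nat. if basis3 ! j = t then c j else 0)"
    by (simp only: lin_comb_def basisU3 l4)
  also have "\<dots> = (if basis3 ! 0 = t then c 0 else 0) + (if basis3 ! 1 = t then c 1 else 0) + (if basis3 ! 2 = t then c 2 else 0) + (if basis3 ! 3 = t then c 3 else 0)"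
    by (rule sum4)
  also have "\<dots> = lc4 (c 0) (c 1) (c 2) (c 3) t"
    by (simp add: basis3_def lc4_def padd_def psmul_def monom_def eq_commute)
  finally show "lin_comb c (basisU 3) t = lc4 (c 0) (c 1) (c 2) (c 3) t" .
qed

lemma span3_0: "\<exists>c. (pminus (monom (Node (Node (Leaf 1) (Leaf 2)) (Leaf 3))) (lin_comb c (basisU 3)) :: 'a::field_char_0 npoly) \<in> Uideal {1..3}"
proof -
  let ?E = "(psmul (0) (pmul (comm (monom (Leaf 1)) (monom (Leaf 2))) (monom (Leaf 3)))) :: 'a npoly"
  have "?E \<in> Uideal {1..3}"
    by (intro I_add I_smul L1 L2 L3 ncm) auto
  moreover have "?E = pminus (monom (Node (Node (Leaf 1) (Leaf 2)) (Leaf 3))) (lc4 (1) (0) (0) (0))"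
    unfolding lc4_def by (simp only: assoc_def comm_def pdist pmul_monom) (simp add: fun_eq_iff padd_def pminus_def psmul_def algebra_simps)
  ultimately show ?thesis
    by (intro exI[of _ "\<lambda>j. [(1), (0), (0), (0)] ! j"]) (simp add: lincomb3)
qed

lemma span3_1: "\<exists>c. (pminus (monom (Node (Node (Leaf 1) (Leaf 3)) (Leaf 2))) (lin_comb c (basisU 3)) :: 'a::field_char_0 npoly) \<in> Uideal {1..3}"
proof -
  let ?E = "(psmul (0) (pmul (comm (monom (Leaf 1)) (monom (Leaf 2))) (monom (Leaf 3)))) :: 'a npoly"
  have "?E \<in> Uideal {1..3}"
    by (intro I_add I_smul L1 L2 L3 ncm) auto
  moreover have "?E = pminus (monom (Node (Node (Leaf 1) (Leaf 3)) (Leaf 2))) (lc4 (0) (1) (0) (0))"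
    unfolding lc4_def by (simp only: assoc_def comm_def pdist pmul_monom) (simp add: fun_eq_iff padd_def pminus_def psmul_def algebra_simps)
  ultimately show ?thesis
    by (intro exI[of _ "\<lambda>j. [(0), (1), (0), (0)] ! j"]) (simp add: lincomb3)
qed

lemma span3_2: "\<exists>c. (pminus (monom (Node (Node (Leaf 2) (Leaf 1)) (Leaf 3))) (lin_comb c (basisU 3)) :: 'a::field_char_0 npoly) \<in> Uideal {1..3}"
proof -
  let ?E = "(psmul (-1) (pmul (comm (monom (Leaf 1)) (monom (Leaf 2))) (monom (Leaf 3)))) :: 'a npoly"
  have "?E \<in> Uideal {1..3}"
    by (intro I_add I_smul L1 L2 L3 ncm) auto
  moreover have "?E = pminus (monom (Node (Node (Leaf 2) (Leaf 1)) (Leaf 3))) (lc4 (1) (0) (0) (0))"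
    unfolding lc4_def by (simp only: assoc_def comm_def pdist pmul_monom) (simp add: fun_eq_iff padd_def pminus_def psmul_def algebra_simps)
  ultimately show ?thesis
    by (intro exI[of _ "\<lambda>j. [(1), (0), (0), (0)] ! j"]) (simp add: lincomb3)
qed

lemma span3_3: "\<exists>c. (pminus (monom (Node (Node (Leaf 2) (Leaf 3)) (Leaf 1))) (lin_comb c (basisU 3)) :: 'a::field_char_0 npoly) \<in> Uideal {1..3}"
proof -
  let ?E = "(padd (padd (psmul (1) (pmul (comm (monom (Leaf 1)) (monom (Leaf 3))) (monom (Leaf 2)))) (psmul (1) (pmul (comm (monom (Leaf 2)) (monom (Leaf 3))) (monom (Leaf 1))))) (psmul (1) (padd (assoc (monom (Leaf 3)) (monom (Leaf 1)) (monom (Leaf 2))) (assoc (monom (Leaf 3)) (monom (Leaf 2)) (monom (Leaf 1)))))) :: 'a npoly"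
  have "?E \<in> Uideal {1..3}"
    by (intro I_add I_smul L1 L2 L3 ncm) auto
  moreover have "?E = pminus (monom (Node (Node (Leaf 2) (Leaf 3)) (Leaf 1))) (lc4 (0) (-1) (1) (1))"
    unfolding lc4_def by (simp only: assoc_def comm_def pdist pmul_monom) (simp add: fun_eq_iff padd_def pminus_def psmul_def algebra_simps)
  ultimately show ?thesis
    by (intro exI[of _ "\<lambda>j. [(0), (-1), (1), (1)] ! j"]) (simp add: lincomb3)
qed

lemma span3_4: "\<exists>c. (pminus (monom (Node (Node (Leaf 3) (Leaf 1)) (Leaf 2))) (lin_comb c (basisU 3)) :: 'a::field_char_0 npoly) \<in> Uideal {1..3}"
proof -
  let ?E = "(psmul (-1) (pmul (comm (monom (Leaf 1)) (monom (Leaf 3))) (monom (Leaf 2)))) :: 'a npoly"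
  have "?E \<in> Uideal {1..3}"
    by (intro I_add I_smul L1 L2 L3 ncm) auto
  moreover have "?E = pminus (monom (Node (Node (Leaf 3) (Leaf 1)) (Leaf 2))) (lc4 (0) (1) (0) (0))"
    unfolding lc4_def by (simp only: assoc_def comm_def pdist pmul_monom) (simp add: fun_eq_iff padd_def pminus_def psmul_def algebra_simps)
  ultimately show ?thesis
    by (intro exI[of _ "\<lambda>j. [(0), (1), (0), (0)] ! j"]) (simp add: lincomb3)
qed

lemma span3_5: "\<exists>c. (pminus (monom (Node (Node (Leaf 3) (Leaf 2)) (Leaf 1))) (lin_comb c (basisU 3)) :: 'a::field_char_0 npoly) \<in> Uideal {1..3}"
proof -
  let ?E = "(padd (psmul (1) (pmul (comm (monom (Leaf 1)) (monom (Leaf 3))) (monom (Leaf 2)))) (psmul (1) (padd (assoc (monom (Leaf 3)) (monom (Leaf 1)) (monom (Leaf 2))) (assoc (monom (Leaf 3)) (monom (Leaf 2)) (monom (Leaf 1)))))) :: 'a npoly"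
  have "?E \<in> Uideal {1..3}"
    by (intro I_add I_smul L1 L2 L3 ncm) auto
  moreover have "?E = pminus (monom (Node (Node (Leaf 3) (Leaf 2)) (Leaf 1))) (lc4 (0) (-1) (1) (1))"
    unfolding lc4_def by (simp only: assoc_def comm_def pdist pmul_monom) (simp add: fun_eq_iff padd_def pminus_def psmul_def algebra_simps)
  ultimately show ?thesis
    by (intro exI[of _ "\<lambda>j. [(0), (-1), (1), (1)] ! j"]) (simp add: lincomb3)
qed

lemma span3_6: "\<exists>c. (pminus (monom (Node (Leaf 1) (Node (Leaf 2) (Leaf 3)))) (lin_comb c (basisU 3)) :: 'a::field_char_0 npoly) \<in> Uideal {1..3}"
proof -
  let ?E = "(padd (padd (psmul (-1) (padd (assoc (monom (Leaf 1)) (monom (Leaf 2)) (monom (Leaf 3))) (assoc (monom (Leaf 1)) (monom (Leaf 3)) (monom (Leaf 2))))) (psmul (1) (padd (assoc (monom (Leaf 1)) (monom (Leaf 3)) (monom (Leaf 2))) (assoc (monom (Leaf 3)) (monom (Leaf 1)) (monom (Leaf 2)))))) (psmul (1) (pmul (comm (monom (Leaf 1)) (monom (Leaf 3))) (monom (Leaf 2))))) :: 'a npoly"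
  have "?E \<in> Uideal {1..3}"
    by (intro I_add I_smul L1 L2 L3 ncm) auto
  moreover have "?E = pminus (monom (Node (Leaf 1) (Node (Leaf 2) (Leaf 3)))) (lc4 (1) (-1) (1) (0))"
    unfolding lc4_def by (simp only: assoc_def comm_def pdist pmul_monom) (simp add: fun_eq_iff padd_def pminus_def psmul_def algebra_simps)
  ultimately show ?thesis
    by (intro exI[of _ "\<lambda>j. [(1), (-1), (1), (0)] ! j"]) (simp add: lincomb3)
qed

lemma span3_7: "\<exists>c. (pminus (monom (Node (Leaf 1) (Node (Leaf 3) (Leaf 2)))) (lin_comb c (basisU 3)) :: 'a::field_char_0 npoly) \<in> Uideal {1..3}"
proof -
  let ?E = "(padd (psmul (-1) (padd (assoc (monom (Leaf 1)) (monom (Leaf 3)) (monom (Leaf 2))) (assoc (monom (Leaf 3)) (monom (Leaf 1)) (monom (Leaf 2))))) (psmul (-1) (pmul (comm (monom (Leaf 1)) (monom (Leaf 3))) (monom (Leaf 2))))) :: 'a npoly"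
  have "?E \<in> Uideal {1..3}"
    by (intro I_add I_smul L1 L2 L3 ncm) auto
  moreover have "?E = pminus (monom (Node (Leaf 1) (Node (Leaf 3) (Leaf 2)))) (lc4 (0) (2) (-1) (0))"
    unfolding lc4_def by (simp only: assoc_def comm_def pdist pmul_monom) (simp add: fun_eq_iff padd_def pminus_def psmul_def algebra_simps)
  ultimately show ?thesis
    by (intro exI[of _ "\<lambda>j. [(0), (2), (-1), (0)] ! j"]) (simp add: lincomb3)
qed

lemma span3_8: "\<exists>c. (pminus (monom (Node (Leaf 2) (Node (Leaf 1) (Leaf 3)))) (lin_comb c (basisU 3)) :: 'a::field_char_0 npoly) \<in> Uideal {1..3}"
proof -
  let ?E = "(padd (padd (padd (padd (psmul (-1) (padd (assoc (monom (Leaf 1)) (monom (Leaf 2)) (monom (Leaf 3))) (assoc (monom (Leaf 2)) (monom (Leaf 1)) (monom (Leaf 3))))) (psmul (1) (padd (assoc (monom (Leaf 1)) (monom (Leaf 2)) (monom (Leaf 3))) (assoc (monom (Leaf 1)) (monom (Leaf 3)) (monom (Leaf 2)))))) (psmul (-1) (pmul (comm (monom (Leaf 1)) (monom (Leaf 2))) (monom (Leaf 3))))) (psmul (-1) (padd (assoc (monom (Leaf 1)) (monom (Leaf 3)) (monom (Leaf 2))) (assoc (monom (Leaf 3)) (monom (Leaf 1)) (monom (Leaf 2)))))) (psmul (-1) (pmul (comm (monom (Leaf 1)) (monom (Leaf 3))) (monom (Leaf 2))))) :: 'a npoly"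
  have "?E \<in> Uideal {1..3}"
    by (intro I_add I_smul L1 L2 L3 ncm) auto
  moreover have "?E = pminus (monom (Node (Leaf 2) (Node (Leaf 1) (Leaf 3)))) (lc4 (1) (1) (-1) (0))"
    unfolding lc4_def by (simp only: assoc_def comm_def pdist pmul_monom) (simp add: fun_eq_iff padd_def pminus_def psmul_def algebra_simps)
  ultimately show ?thesis
    by (intro exI[of _ "\<lambda>j. [(1), (1), (-1), (0)] ! j"]) (simp add: lincomb3)
qed

lemma span3_9: "\<exists>c. (pminus (monom (Node (Leaf 2) (Node (Leaf 3) (Leaf 1)))) (lin_comb c (basisU 3)) :: 'a::field_char_0 npoly) \<in> Uideal {1..3}"
proof -
  let ?E = "(padd (padd (padd (psmul (2) (pmul (comm (monom (Leaf 1)) (monom (Leaf 3))) (monom (Leaf 2)))) (psmul (-1) (padd (assoc (monom (Leaf 2)) (monom (Leaf 3)) (monom (Leaf 1))) (assoc (monom (Leaf 3)) (monom (Leaf 2)) (monom (Leaf 1)))))) (psmul (1) (pmul (comm (monom (Leaf 2)) (monom (Leaf 3))) (monom (Leaf 1))))) (psmul (2) (padd (assoc (monom (Leaf 3)) (monom (Leaf 1)) (monom (Leaf 2))) (assoc (monom (Leaf 3)) (monom (Leaf 2)) (monom (Leaf 1)))))) :: 'a npoly"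
  have "?E \<in> Uideal {1..3}"
    by (intro I_add I_smul L1 L2 L3 ncm) auto
  moreover have "?E = pminus (monom (Node (Leaf 2) (Node (Leaf 3) (Leaf 1)))) (lc4 (0) (-2) (2) (1))"
    unfolding lc4_def by (simp only: assoc_def comm_def pdist pmul_monom) (simp add: fun_eq_iff padd_def pminus_def psmul_def algebra_simps)
  ultimately show ?thesis
    by (intro exI[of _ "\<lambda>j. [(0), (-2), (2), (1)] ! j"]) (simp add: lincomb3)
qed

lemma span3_10: "\<exists>c. (pminus (monom (Node (Leaf 3) (Node (Leaf 1) (Leaf 2)))) (lin_comb c (basisU 3)) :: 'a::field_char_0 npoly) \<in> Uideal {1..3}"
proof -
  let ?E = "(psmul (0) (pmul (comm (monom (Leaf 1)) (monom (Leaf 2))) (monom (Leaf 3)))) :: 'a npoly"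
  have "?E \<in> Uideal {1..3}"
    by (intro I_add I_smul L1 L2 L3 ncm) auto
  moreover have "?E = pminus (monom (Node (Leaf 3) (Node (Leaf 1) (Leaf 2)))) (lc4 (0) (0) (1) (0))"
    unfolding lc4_def by (simp only: assoc_def comm_def pdist pmul_monom) (simp add: fun_eq_iff padd_def pminus_def psmul_def algebra_simps)
  ultimately show ?thesis
    by (intro exI[of _ "\<lambda>j. [(0), (0), (1), (0)] ! j"]) (simp add: lincomb3)
qed

lemma span3_11: "\<exists>c. (pminus (monom (Node (Leaf 3) (Node (Leaf 2) (Leaf 1)))) (lin_comb c (basisU 3)) :: 'a::field_char_0 npoly) \<in> Uideal {1..3}"
proof -
  let ?E = "(psmul (0) (pmul (comm (monom (Leaf 1)) (monom (Leaf 2))) (monom (Leaf 3)))) :: 'a npoly"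
  have "?E \<in> Uideal {1..3}"
    by (intro I_add I_smul L1 L2 L3 ncm) auto
  moreover have "?E = pminus (monom (Node (Leaf 3) (Node (Leaf 2) (Leaf 1)))) (lc4 (0) (0) (0) (1))"
    unfolding lc4_def by (simp only: assoc_def comm_def pdist pmul_monom) (simp add: fun_eq_iff padd_def pminus_def psmul_def algebra_simps)
  ultimately show ?thesis
    by (intro exI[of _ "\<lambda>j. [(0), (0), (0), (1)] ! j"]) (simp add: lincomb3)
qed


lemma basis_big: "n \<noteq> 1 \<Longrightarrow> n \<noteq> 2 \<Longrightarrow> n \<noteq> 3 \<Longrightarrow>
  basisU n = map (\<lambda>k. lnorm (filter (\<lambda>i. i \<noteq> k) [1..<n+1] @ [k])) [1..<n+1]"
  by (simp add: basisU_def)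

lemma multilin_len: "multilinear n t \<Longrightarrow> length (leaves t) = n"
  unfolding multilinear_def by (metis card_atLeastAtMost diff_Suc_1 distinct_card)

lemma span_gen: assumes "n \<ge> 4" "multilinear n t"
  shows "\<exists>c. (pminus (monom t) (lin_comb c (basisU n)) :: 'a::field_char_0 npoly) \<in> Uideal {1..n}"
proof -
  let ?xs = "leaves t"
  have dist: "distinct ?xs" and setx: "set ?xs = {1..n}" using assms(2) by (auto simp: multilinear_def)
  have len: "length ?xs = n" using multilin_len[OF assms(2)] .
  have ne: "?xs \<noteq> []" by (rule leaves_nonempty)
  define k where "k = last ?xs"
  define w where "w = butlast ?xs"
  have xs: "?xs = w @ [k]" using ne by (simp add: k_def w_def)
  have kV: "k \<in> {1..n}" using setx ne k_def last_in_set by blast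
  have 1: "teq TYPE('a) {1..n} t (lnorm ?xs)"
    using nf[of t "{1..n}"] setx len assms(1) by simp
  define f where "f = filter (\<lambda>i. i \<noteq> k) [1..<n+1]"
  have dw: "distinct w" "k \<notin> set w" using dist xs by (metis distinct_append distinct.simps(2) not_distinct_conv_prefix)+
  have sw: "set w = {1..n} - {k}" using setx xs dw by auto
  have sf: "set f = {1..n} - {k}" by (auto simp: f_def)
  have df: "distinct f" by (simp add: f_def)
  have ms: "mset w = mset f" using sw sf dw df by (simp add: set_eq_iff_mset_eq_distinct[symmetric])
  have 2: "teq TYPE('a) {1..n} (lnorm (w @ [k])) (lnorm (f @ [k]))"
    using perm_teq[OF ms, of "{1..n}" k] sw kV by auto
  have n123: "n \<noteq> 1" "n \<noteq> 2" "n \<noteq> 3" using assms(1) by auto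
  have lenB: "length (basisU n) = n" using basis_big[OF n123] by simp
  have kk: "k - 1 < length [1..<n+1]" using kV by auto
  have uk: "[1..<n+1] ! (k - 1) = k" using kV by (subst nth_upt) auto
  have Bk: "basisU n ! (k - 1) = lnorm (f @ [k])"
    by (simp only: basis_big[OF n123] nth_map[OF kk] uk f_def)
  have kl: "k - 1 < length (basisU n)" using kV lenB by auto
  have "teq TYPE('a) {1..n} t (basisU n ! (k - 1))"
    using teq_trans[OF 1] 2 xs Bk by simp
  then have "(pminus (monom t) (lin_comb (\<lambda>j. if j = k - 1 then 1 else 0) (basisU n)) :: 'a npoly) \<in> Uideal {1..n}"
    unfolding lin_comb_single[OF kl] .
  then show ?thesis by blast
qed

lemma leaves1: "length (leaves s) = 1 \<Longrightarrow> \<exists>a. s = Leaf a"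
proof (cases s)
  case (Node s1 s2)
  assume "length (leaves s) = 1"
  then have False using len_pos[of s1] len_pos[of s2] Node by simp
  then show ?thesis ..
qed auto

lemma leaves2: "length (leaves s) = 2 \<Longrightarrow> \<exists>a b. s = Node (Leaf a) (Leaf b)"
proof (cases s)
  case (Node s1 s2)
  assume "length (leaves s) = 2"
  then have "length (leaves s1) = 1" "length (leaves s2) = 1"
    using len_pos[of s1] len_pos[of s2] Node by auto
  then show ?thesis using Node leaves1 by blast
qed auto

lemma basisU1: "basisU 1 = [Leaf 1]" by (simp add: basisU_def)
lemma basisU2: "basisU 2 = [Node (Leaf 1) (Leaf 2), Node (Leaf 2) (Leaf 1)]" by (simp add: basisU_def)

lemma span_elem: assumes "i < length B" "t = B ! i"
  shows "\<exists>c. (pminus (monom t) (lin_comb c B) :: 'a::field_char_0 npoly) \<in> Uideal V"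
proof -
  have "(pminus (monom t) (lin_comb (\<lambda>j. if j = i then 1 else 0) B) :: 'a npoly) \<in> Uideal V"
    unfolding lin_comb_single[OF assms(1)] assms(2) by (rule teq_refl)
  then show ?thesis by blast
qed

lemma span1: assumes "multilinear 1 t"
  shows "\<exists>c. (pminus (monom t) (lin_comb c (basisU 1)) :: 'a::field_char_0 npoly) \<in> Uideal {1..1}"
proof -
  obtain a where t: "t = Leaf a" using leaves1 multilin_len[OF assms] by blast
  then have "a = 1" using assms by (simp add: multilinear_def)
  then show ?thesis using t unfolding basisU1 by (intro span_elem[of 0]) simp_all
qed

lemma span2: assumes "multilinear 2 t"
  shows "\<exists>c. (pminus (monom t) (lin_comb c (basisU 2)) :: 'a::field_char_0 npoly) \<in> Uideal {1..2}"
proof -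
  obtain a b where t: "t = Node (Leaf a) (Leaf b)" using leaves2 multilin_len[OF assms] by blast
  have d: "a \<noteq> b" and s: "set [a, b] = {1..2}" using assms t by (simp_all add: multilinear_def)
  have "a \<in> set [a,b]" "b \<in> set [a,b]" by simp_all
  then have "a \<in> {1..2}" "b \<in> {1..2}" unfolding s .
  then have "a = 1 \<or> a = 2" "b = 1 \<or> b = 2" by auto
  then have "(a = 1 \<and> b = 2) \<or> (a = 2 \<and> b = 1)" using d by auto
  then show ?thesis
  proof
    assume "a = 1 \<and> b = 2"
    then show ?thesis using t by (intro span_elem[of 0]) (simp_all add: basisU2)
  next
    assume "a = 2 \<and> b = 1"
    then show ?thesis using t by (intro span_elem[of 1]) (simp_all add: basisU2)
  qed
qed

lemma perm3: assumes "distinct [a, b, c]" "set [a, b, c] = {1..3::nat}"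
  shows "(a = 1 \<and> b = 2 \<and> c = 3) \<or> (a = 1 \<and> b = 3 \<and> c = 2) \<or> (a = 2 \<and> b = 1 \<and> c = 3) \<or>
         (a = 2 \<and> b = 3 \<and> c = 1) \<or> (a = 3 \<and> b = 1 \<and> c = 2) \<or> (a = 3 \<and> b = 2 \<and> c = 1)"
proof -
  have "a \<in> set [a,b,c]" "b \<in> set [a,b,c]" "c \<in> set [a,b,c]" by simp_all
  then have "a \<in> {1..3}" "b \<in> {1..3}" "c \<in> {1..3}" unfolding assms(2) .
  then have "a = 1 \<or> a = 2 \<or> a = 3" "b = 1 \<or> b = 2 \<or> b = 3" "c = 1 \<or> c = 2 \<or> c = 3" by auto
  moreover have "a \<noteq> b" "a \<noteq> c" "b \<noteq> c" using assms(1) by auto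
  ultimately show ?thesis by blast
qed

lemma span3: assumes "multilinear 3 t"
  shows "\<exists>c. (pminus (monom t) (lin_comb c (basisU 3)) :: 'a::field_char_0 npoly) \<in> Uideal {1..3}"
proof -
  have d: "distinct (leaves t)" and s: "set (leaves t) = {1..3}" using assms by (auto simp: multilinear_def)
  from leaves3[OF multilin_len[OF assms]] show ?thesis
  proof
    assume "\<exists>a b c. t = Node (Node (Leaf a) (Leaf b)) (Leaf c)"
    then obtain a b c where t: "t = Node (Node (Leaf a) (Leaf b)) (Leaf c)" by blast
    have "distinct [a, b, c]" "set [a, b, c] = {1..3}" using d s t by simp_all
    from perm3[OF this] show ?thesis
      apply (elim disjE conjE)
      using t span3_0 span3_1 span3_2 span3_3 span3_4 span3_5 by simp_all
  next
    assume "\<exists>a b c. t = Node (Leaf a) (Node (Leaf b) (Leaf c))"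
    then obtain a b c where t: "t = Node (Leaf a) (Node (Leaf b) (Leaf c))" by blast
    have "distinct [a, b, c]" "set [a, b, c] = {1..3}" using d s t by simp_all
    from perm3[OF this] show ?thesis
      apply (elim disjE conjE)
      using t span3_6 span3_7 span3_8 span3_9 span3_10 span3_11 by simp_all
  qed
qed


section \<open>Models\<close>

locale umodel =
  fixes mu :: "'b::ab_group_add \<Rightarrow> 'b \<Rightarrow> 'b" and sm :: "'a::field \<Rightarrow> 'b \<Rightarrow> 'b"
  assumes mu_addL: "mu (x + y) z = mu x z + mu y z"
  and mu_addR: "mu x (y + z) = mu x y + mu x z"
  and mu_smL: "mu (sm c x) y = sm c (mu x y)"
  and mu_smR: "mu x (sm c y) = sm c (mu x y)"
  and sm_add: "sm c (x + y) = sm c x + sm c y"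
  and sm_addc: "sm (c + d) x = sm c x + sm d x"
  and sm_mult: "sm (c * d) x = sm c (sm d x)"
  and altL: "mu (mu x x) y = mu x (mu x y)"
  and altR: "mu (mu x y) y = mu x (mu y y)"
  and lcomm: "mu (mu x y) z = mu (mu y x) z"
begin

lemma mu_0L[simp]: "mu 0 y = 0" using mu_addL[of 0 0 y] by simp
lemma mu_0R[simp]: "mu x 0 = 0" using mu_addR[of x 0 0] by simp
lemma sm_0[simp]: "sm c 0 = 0" using sm_add[of c 0 0] by simp
lemma sm_0c[simp]: "sm 0 x = 0" using sm_addc[of 0 0 x] by simp
lemma mu_diffL: "mu (x - y) z = mu x z - mu y z"
  using mu_addL[of "x - y" y z] by (simp add: eq_diff_eq)
lemma mu_diffR: "mu z (x - y) = mu z x - mu z y"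
  using mu_addR[of z "x - y" y] by (simp add: eq_diff_eq)
lemma sm_diffc: "sm (c - d) x = sm c x - sm d x"
  using sm_addc[of "c - d" d x] by (simp add: eq_diff_eq)

lemma mu_sumL: "mu (sum f S) y = (\<Sum>i\<in>S. mu (f i) y)"
  by (induction S rule: infinite_finite_induct) (auto simp: mu_addL)
lemma mu_sumR: "mu y (sum f S) = (\<Sum>i\<in>S. mu y (f i))"
  by (induction S rule: infinite_finite_induct) (auto simp: mu_addR)
lemma sm_sum: "sm c (sum f S) = (\<Sum>i\<in>S. sm c (f i))"
  by (induction S rule: infinite_finite_induct) (auto simp: sm_add)
lemma sm_sumc: "sm (sum g S) x = (\<Sum>i\<in>S. sm (g i) x)"
  by (induction S rule: infinite_finite_induct) (auto simp: sm_addc)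

primrec ev :: "(nat \<Rightarrow> 'b) \<Rightarrow> tree \<Rightarrow> 'b" where
  "ev \<sigma> (Leaf i) = \<sigma> i"
| "ev \<sigma> (Node l r) = mu (ev \<sigma> l) (ev \<sigma> r)"

definition E :: "(nat \<Rightarrow> 'b) \<Rightarrow> 'a npoly \<Rightarrow> 'b" where
  "E \<sigma> p = (\<Sum>t\<in>{t. p t \<noteq> 0}. sm (p t) (ev \<sigma> t))"

lemma E_sup: assumes "finite S" "{t. p t \<noteq> 0} \<subseteq> S"
  shows "E \<sigma> p = (\<Sum>t\<in>S. sm (p t) (ev \<sigma> t))"
  unfolding E_def by (rule sum.mono_neutral_left) (use assms in auto)

lemma E_padd: assumes "finite {t. p t \<noteq> 0}" "finite {t. q t \<noteq> 0}"
  shows "E \<sigma> (padd p q) = E \<sigma> p + E \<sigma> q"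
proof -
  let ?S = "{t. p t \<noteq> 0} \<union> {t. q t \<noteq> 0}"
  have f: "finite ?S" using assms by simp
  have "E \<sigma> (padd p q) = (\<Sum>t\<in>?S. sm (padd p q t) (ev \<sigma> t))"
    by (rule E_sup[OF f]) (auto simp: padd_def)
  also have "\<dots> = (\<Sum>t\<in>?S. sm (p t) (ev \<sigma> t)) + (\<Sum>t\<in>?S. sm (q t) (ev \<sigma> t))"
    by (simp add: padd_def sm_addc sum.distrib)
  also have "\<dots> = E \<sigma> p + E \<sigma> q"
    using E_sup[OF f, of p] E_sup[OF f, of q] by auto
  finally show ?thesis .
qed

lemma E_pminus: assumes "finite {t. p t \<noteq> 0}" "finite {t. q t \<noteq> 0}"
  shows "E \<sigma> (pminus p q) = E \<sigma> p - E \<sigma> q"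
proof -
  let ?S = "{t. p t \<noteq> 0} \<union> {t. q t \<noteq> 0}"
  have f: "finite ?S" using assms by simp
  have "E \<sigma> (pminus p q) = (\<Sum>t\<in>?S. sm (pminus p q t) (ev \<sigma> t))"
    by (rule E_sup[OF f]) (auto simp: pminus_def)
  also have "\<dots> = (\<Sum>t\<in>?S. sm (p t) (ev \<sigma> t)) - (\<Sum>t\<in>?S. sm (q t) (ev \<sigma> t))"
    by (simp add: pminus_def sm_diffc sum_subtractf)
  also have "\<dots> = E \<sigma> p - E \<sigma> q"
    using E_sup[OF f, of p] E_sup[OF f, of q] by auto
  finally show ?thesis .
qed

lemma E_psmul: assumes "finite {t. p t \<noteq> 0}"
  shows "E \<sigma> (psmul c p) = sm c (E \<sigma> p)"
proof -
  have "E \<sigma> (psmul c p) = (\<Sum>t\<in>{t. p t \<noteq> 0}. sm (psmul c p t) (ev \<sigma> t))"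
    by (rule E_sup[OF assms]) (auto simp: psmul_def)
  also have "\<dots> = sm c (E \<sigma> p)"
    by (simp add: E_def psmul_def sm_mult sm_sum)
  finally show ?thesis .
qed

lemma E_pmul: assumes fp: "finite {t. p t \<noteq> 0}" and fq: "finite {t. q t \<noteq> 0}"
  shows "E \<sigma> (pmul p q) = mu (E \<sigma> p) (E \<sigma> q)"
proof -
  let ?A = "{t. p t \<noteq> 0}" and ?B = "{t. q t \<noteq> 0}"
  let ?S = "(\<lambda>(l, r). Node l r) ` (?A \<times> ?B)"
  have fS: "finite ?S" using fp fq by simp
  have sub: "{t. pmul p q t \<noteq> 0} \<subseteq> ?S"
  proof
    fix t assume "t \<in> {t. pmul p q t \<noteq> 0}"
    then show "t \<in> ?S" by (cases t) (auto simp: pmul_def)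
  qed
  have inj: "inj_on (\<lambda>(l, r). Node l r) (?A \<times> ?B)" by (auto simp: inj_on_def)
  have "E \<sigma> (pmul p q) = (\<Sum>t\<in>?S. sm (pmul p q t) (ev \<sigma> t))"
    by (rule E_sup[OF fS sub])
  also have "\<dots> = (\<Sum>x\<in>?A \<times> ?B. sm (p (fst x) * q (snd x)) (mu (ev \<sigma> (fst x)) (ev \<sigma> (snd x))))"
    by (subst sum.reindex[OF inj]) (auto simp: pmul_def intro!: sum.cong)
  also have "\<dots> = (\<Sum>l\<in>?A. \<Sum>r\<in>?B. sm (p l * q r) (mu (ev \<sigma> l) (ev \<sigma> r)))"
    by (simp add: sum.cartesian_product case_prod_beta)
  also have "\<dots> = (\<Sum>l\<in>?A. \<Sum>r\<in>?B. mu (sm (p l) (ev \<sigma> l)) (sm (q r) (ev \<sigma> r)))"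
    by (simp add: mu_smL mu_smR sm_mult[symmetric] mult.commute)
  also have "\<dots> = mu (E \<sigma> p) (E \<sigma> q)"
    by (simp only: E_def mu_sumL) (simp only: mu_sumR)
  finally show ?thesis .
qed

lemma E_zero: "E \<sigma> (\<lambda>t. 0) = 0" by (simp add: E_def)

lemma fin: "ncpoly V p \<Longrightarrow> finite {t. p t \<noteq> 0}" by (simp add: ncpoly_def)
lemma finI: "p \<in> Uideal V \<Longrightarrow> finite {t. p t \<noteq> 0}" by (rule fin[OF I_nc])

lemma fin_pmul: assumes "finite {t. p t \<noteq> 0}" "finite {t. q t \<noteq> 0}"
  shows "finite {t. pmul p q t \<noteq> 0}"
proof -
  have sub: "{t. pmul p q t \<noteq> 0} \<subseteq> (\<lambda>(l, r). Node l r) ` ({t. p t \<noteq> 0} \<times> {t. q t \<noteq> 0})"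
  proof
    fix t assume "t \<in> {t. pmul p q t \<noteq> 0}"
    then show "t \<in> (\<lambda>(l, r). Node l r) ` ({t. p t \<noteq> 0} \<times> {t. q t \<noteq> 0})" by (cases t) (auto simp: pmul_def)
  qed
  show ?thesis using assms by (intro finite_subset[OF sub]) auto
qed

lemma E_ideal: "p \<in> Uideal V \<Longrightarrow> E \<sigma> p = 0"
proof (induction rule: Uideal.induct)
  case (alt_left a b)
  then have "finite {t. a t \<noteq> 0}" "finite {t. b t \<noteq> 0}" by (auto simp: ncpoly_def)
  then show ?case
    by (simp add: assoc_def E_pminus E_pmul fin_pmul altL)
next
  case (alt_right a b)
  then have "finite {t. a t \<noteq> 0}" "finite {t. b t \<noteq> 0}" by (auto simp: ncpoly_def)
  then show ?case
    by (simp add: assoc_def E_pminus E_pmul fin_pmul altR)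
next
  case (comm_left a b c)
  then have "finite {t. a t \<noteq> 0}" "finite {t. b t \<noteq> 0}" "finite {t. c t \<noteq> 0}" by (auto simp: ncpoly_def)
  then show ?case
    by (simp add: E_pminus E_pmul fin_pmul lcomm[of "E \<sigma> a"])
next
  case zero then show ?case by (rule E_zero)
next
  case (add p q) then show ?case by (simp add: E_padd finI)
next
  case (smul p c) then show ?case by (simp add: E_psmul finI)
next
  case (lmul p r)
  then have "finite {t. r t \<noteq> 0}" by (auto simp: ncpoly_def)
  then show ?case using lmul by (simp add: E_pmul finI)
next
  case (rmul p r)
  then have "finite {t. r t \<noteq> 0}" by (auto simp: ncpoly_def)
  then show ?case using rmul by (simp add: E_pmul finI)
qed

lemma E_lincomb: "E \<sigma> (lin_comb c B) = (\<Sum>j<length B. sm (c j) (ev \<sigma> (B ! j)))"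
proof -
  have sub: "{t. lin_comb c B t \<noteq> 0} \<subseteq> set B"
  proof
    fix t assume "t \<in> {t. lin_comb c B t \<noteq> 0}"
    then obtain j where "j < length B" "B ! j = t"
      unfolding lin_comb_def by (auto elim: sum.not_neutral_contains_not_neutral split: if_splits)
    then show "t \<in> set B" by auto
  qed
  have "E \<sigma> (lin_comb c B) = (\<Sum>t\<in>set B. sm (lin_comb c B t) (ev \<sigma> t))"
    by (rule E_sup[OF _ sub]) simp
  also have "\<dots> = (\<Sum>t\<in>set B. \<Sum>j<length B. sm (if B ! j = t then c j else 0) (ev \<sigma> t))"
    by (simp add: lin_comb_def sm_sumc)
  also have "\<dots> = (\<Sum>j<length B. \<Sum>t\<in>set B. sm (if B ! j = t then c j else 0) (ev \<sigma> t))"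
    by (rule sum.swap)
  also have "\<dots> = (\<Sum>j<length B. sm (c j) (ev \<sigma> (B ! j)))"
  proof (rule sum.cong)
    fix j assume "j \<in> {..<length B}"
    then have jB: "B ! j \<in> set B" by simp
    have "(\<Sum>t\<in>set B. sm (if B ! j = t then c j else 0) (ev \<sigma> t)) = (\<Sum>t\<in>set B. if B ! j = t then sm (c j) (ev \<sigma> (B ! j)) else 0)"
      by (rule sum.cong) auto
    also have "\<dots> = sm (c j) (ev \<sigma> (B ! j))" using jB by simp
    finally show "(\<Sum>t\<in>set B. sm (if B ! j = t then c j else 0) (ev \<sigma> t)) = sm (c j) (ev \<sigma> (B ! j))" .
  qed simp
  finally show ?thesis .
qed

end


definition mu1 :: "'a::field \<times> 'a \<Rightarrow> 'a \<times> 'a \<Rightarrow> 'a \<times> 'a" where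
  "mu1 x y = (fst x * fst y, fst x * snd y)"
definition sm1 :: "'a::field \<Rightarrow> 'a \<times> 'a \<Rightarrow> 'a \<times> 'a" where
  "sm1 c x = (c * fst x, c * snd x)"

interpretation M1: umodel "mu1 :: 'a::field \<times> 'a \<Rightarrow> _" sm1
  by unfold_locales (auto simp: mu1_def sm1_def algebra_simps)

definition cross :: "'a::field \<times> 'a \<times> 'a \<Rightarrow> 'a \<times> 'a \<times> 'a \<Rightarrow> 'a \<times> 'a \<times> 'a" where
  "cross u v = (fst (snd u) * snd (snd v) - snd (snd u) * fst (snd v),
                snd (snd u) * fst v - fst u * snd (snd v),
                fst u * fst (snd v) - fst (snd u) * fst v)"
definition dot :: "'a::field \<times> 'a \<times> 'a \<Rightarrow> 'a \<times> 'a \<times> 'a \<Rightarrow> 'a" where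
  "dot u v = fst u * fst v + fst (snd u) * fst (snd v) + snd (snd u) * snd (snd v)"
definition sc3 :: "'a::field \<Rightarrow> 'a \<times> 'a \<times> 'a \<Rightarrow> 'a \<times> 'a \<times> 'a" where
  "sc3 c u = (c * fst u, c * fst (snd u), c * snd (snd u))"
definition mu2 :: "('a::field \<times> 'a \<times> 'a) \<times> ('a \<times> 'a \<times> 'a) \<times> 'a \<Rightarrow> ('a \<times> 'a \<times> 'a) \<times> ('a \<times> 'a \<times> 'a) \<times> 'a \<Rightarrow> ('a \<times> 'a \<times> 'a) \<times> ('a \<times> 'a \<times> 'a) \<times> 'a" where
  "mu2 x y = (0, cross (fst x) (fst y), dot (fst x) (fst (snd y)))"
definition sm2 :: "'a::field \<Rightarrow> ('a \<times> 'a \<times> 'a) \<times> ('a \<times> 'a \<times> 'a) \<times> 'a \<Rightarrow> ('a \<times> 'a \<times> 'a) \<times> ('a \<times> 'a \<times> 'a) \<times> 'a" where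
  "sm2 c x = (sc3 c (fst x), sc3 c (fst (snd x)), c * snd (snd x))"

interpretation M2: umodel "mu2 :: ('a::field \<times> 'a \<times> 'a) \<times> ('a \<times> 'a \<times> 'a) \<times> 'a \<Rightarrow> _" sm2
  by unfold_locales (auto simp: mu2_def sm2_def cross_def dot_def sc3_def algebra_simps zero_prod_def)

lemma M1_fst_lw: "fst (M1.ev \<sigma> (lw t xs)) = fst (M1.ev \<sigma> t) * prod_list (map (\<lambda>i. fst (\<sigma> i)) xs)"
  by (induction xs arbitrary: t) (auto simp: mu1_def mult.assoc)

lemma prod_list_one: "(\<And>i. i \<in> set xs \<Longrightarrow> f i = (1::'a::comm_monoid_mult)) \<Longrightarrow> prod_list (map f xs) = 1"
  by (induction xs) auto

definition sk :: "nat \<Rightarrow> nat \<Rightarrow> 'a::field \<times> 'a" where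
  "sk k i = (if i = k then (0, 1) else (1, 0))"

lemma ev_basis_gen: assumes "2 \<le> n" "1 \<le> j" "j \<le> n"
  shows "snd (M1.ev (sk k) (lnorm (filter (\<lambda>i. i \<noteq> j) [1..<n+1] @ [j])) :: 'a::field \<times> 'a) = (if j = k then 1 else 0)"
proof -
  define ws where "ws = filter (\<lambda>i. i \<noteq> j) [1..<n+1]"
  have "(if j = 1 then 2 else 1) \<in> set ws" using assms by (auto simp: ws_def)
  then have ne: "ws \<noteq> []" by auto
  then obtain x xs where wx: "ws = x # xs" by (cases ws) auto
  have fst_ws: "fst (M1.ev (sk k) (lnorm ws) :: 'a \<times> 'a) = prod_list (map (\<lambda>i. fst (sk k i :: 'a \<times> 'a)) ws)"
    unfolding wx by (simp add: M1_fst_lw)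
  have ev: "M1.ev (sk k) (lnorm (ws @ [j])) = mu1 (M1.ev (sk k) (lnorm ws)) (sk k j :: 'a \<times> 'a)"
    by (simp add: lnorm_snoc[OF ne])
  show ?thesis
  proof (cases "j = k")
    case True
    have "prod_list (map (\<lambda>i. fst (sk k i :: 'a \<times> 'a)) ws) = 1"
      by (rule prod_list_one) (auto simp: sk_def True ws_def)
    then show ?thesis using fst_ws True unfolding ws_def[symmetric] ev by (simp add: mu1_def sk_def)
  next
    case False
    then show ?thesis unfolding ws_def[symmetric] ev by (simp add: mu1_def sk_def)
  qed
qed

lemma indep_gen: assumes n: "4 \<le> n" and I: "lin_comb c (basisU n) \<in> (Uideal {1..n} :: 'a::field npoly set)"
  and j0: "j0 < n"
  shows "c j0 = 0"
proof -
  have n123: "n \<noteq> 1" "n \<noteq> 2" "n \<noteq> 3" using n by auto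
  let ?B = "basisU n"
  have lenB: "length ?B = n" using basis_big[OF n123] by simp
  have evB: "snd (M1.ev (sk (Suc j0)) (?B ! j) :: 'a \<times> 'a) = (if j = j0 then 1 else 0)" if "j < n" for j
  proof -
    have kk: "j < length [1..<n+1]" using that by simp
    have uk: "[1..<n+1] ! j = j + 1" using that by (subst nth_upt) auto
    have "?B ! j = lnorm (filter (\<lambda>i. i \<noteq> j + 1) [1..<n+1] @ [j + 1])"
      by (simp only: basis_big[OF n123] nth_map[OF kk] uk)
    then show ?thesis using ev_basis_gen[of n "j + 1" "Suc j0"] n that by simp
  qed
  have "M1.E (sk (Suc j0)) (lin_comb c ?B) = (0 :: 'a \<times> 'a)" by (rule M1.E_ideal[OF I])
  then have "0 = snd (M1.E (sk (Suc j0)) (lin_comb c ?B) :: 'a \<times> 'a)" by simp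
  also have "\<dots> = (\<Sum>j<n. c j * snd (M1.ev (sk (Suc j0)) (?B ! j) :: 'a \<times> 'a))"
    unfolding M1.E_lincomb snd_sum lenB by (simp add: sm1_def)
  also have "\<dots> = (\<Sum>j<n. if j = j0 then c j else 0)"
    by (rule sum.cong) (auto simp: evB)
  also have "\<dots> = c j0" using j0 by simp
  finally show ?thesis by simp
qed

lemma sum2: "(\<Sum>j<2::nat. f j) = f 0 + (f 1 :: 'a::comm_monoid_add)"
  by (simp add: eval_nat_numeral)

lemma indep1: assumes I: "lin_comb c (basisU 1) \<in> (Uideal {1..1} :: 'a::field npoly set)"
  shows "c 0 = 0"
proof -
  have "M1.E (\<lambda>i. (1, 0)) (lin_comb c [Leaf 1]) = (0 :: 'a \<times> 'a)"
    using M1.E_ideal[OF I[unfolded basisU1]] .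
  then show ?thesis unfolding M1.E_lincomb by (simp add: sm1_def zero_prod_def)
qed

lemma indep2: assumes I: "lin_comb c (basisU 2) \<in> (Uideal {1..2} :: 'a::field npoly set)"
  shows "c 0 = 0" "c 1 = 0"
proof -
  have "M1.E (sk 2) (lin_comb c [Node (Leaf 1) (Leaf 2), Node (Leaf 2) (Leaf 1)]) = (0 :: 'a \<times> 'a)"
    using M1.E_ideal[OF I[unfolded basisU2]] .
  then show "c 0 = 0" unfolding M1.E_lincomb by (simp add: sum2 sm1_def mu1_def sk_def zero_prod_def)
  have "M1.E (sk 1) (lin_comb c [Node (Leaf 1) (Leaf 2), Node (Leaf 2) (Leaf 1)]) = (0 :: 'a \<times> 'a)"
    using M1.E_ideal[OF I[unfolded basisU2]] .
  then show "c 1 = 0" unfolding M1.E_lincomb by (simp add: sum2 sm1_def mu1_def sk_def zero_prod_def)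
qed

definition s2 :: "nat \<Rightarrow> ('a::field \<times> 'a \<times> 'a) \<times> ('a \<times> 'a \<times> 'a) \<times> 'a" where
  "s2 i = (if i = 1 then ((1, 0, 0), 0, 0) else if i = 2 then ((0, 1, 0), 0, 0) else if i = 3 then ((0, 0, 1), 0, 0) else 0)"

lemma indep3: assumes I: "lin_comb c (basisU 3) \<in> (Uideal {1..3} :: 'a::field npoly set)"
  shows "c 0 = 0" "c 1 = 0" "c 2 = 0" "c 3 = 0"
proof -
  have l4: "length basis3 = 4" by (simp add: basis3_def)
  have e1: "M1.E (sk 3) (lin_comb c basis3) = (0 :: 'a \<times> 'a)"
    using M1.E_ideal[OF I[unfolded basisU3]] .
  have e2: "M1.E (sk 2) (lin_comb c basis3) = (0 :: 'a \<times> 'a)"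
    using M1.E_ideal[OF I[unfolded basisU3]] .
  have e3: "M1.E (sk 1) (lin_comb c basis3) = (0 :: 'a \<times> 'a)"
    using M1.E_ideal[OF I[unfolded basisU3]] .
  have e4: "M2.E s2 (lin_comb c basis3) = 0"
    using M2.E_ideal[OF I[unfolded basisU3]] .
  from e1 have a: "c 0 = 0"
    unfolding M1.E_lincomb l4 sum4 by (simp add: basis3_def sm1_def mu1_def sk_def zero_prod_def)
  from e2 have b: "c 1 + c 2 = 0"
    unfolding M1.E_lincomb l4 sum4 by (simp add: basis3_def sm1_def mu1_def sk_def zero_prod_def)
  from e3 have d: "c 3 = 0"
    unfolding M1.E_lincomb l4 sum4 by (simp add: basis3_def sm1_def mu1_def sk_def zero_prod_def)
  from e4 have e: "c 2 - c 3 = 0"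
    unfolding M2.E_lincomb l4 sum4 by (simp add: basis3_def sm2_def mu2_def s2_def cross_def dot_def sc3_def zero_prod_def)
  show "c 0 = 0" "c 1 = 0" "c 2 = 0" "c 3 = 0" using a b d e by auto
qed


lemma multi_basis: assumes "1 \<le> n" "b \<in> set (basisU n)" shows "multilinear n b"
proof -
  consider "n = 1" | "n = 2" | "n = 3" | "n \<ge> 4" using assms(1) by linarith
  then show ?thesis
  proof cases
    case 1 then show ?thesis using assms(2) unfolding 1 basisU1 by (simp add: multilinear_def)
  next
    case 2
    have e: "{1..2::nat} = {1, 2}" by auto
    show ?thesis using assms(2) 2 by (auto simp: basisU2 multilinear_def e)
  next
    case 3
    have e: "{1..3::nat} = {1, 2, 3}" by auto
    show ?thesis using assms(2) 3 by (auto simp: basisU3 basis3_def multilinear_def e)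
  next
    case 4
    then have n123: "n \<noteq> 1" "n \<noteq> 2" "n \<noteq> 3" by auto
    from assms(2) obtain k where k0: "k \<in> set [1..<n+1]" and b: "b = lnorm (filter (\<lambda>i. i \<noteq> k) [1..<n+1] @ [k])"
      unfolding basis_big[OF n123] set_map by blast
    have k: "k \<in> {1..n}" using k0 unfolding set_upt by auto
    have lv: "leaves b = filter (\<lambda>i. i \<noteq> k) [1..<n+1] @ [k]" unfolding b by (rule leaves_lnorm) simp
    show ?thesis unfolding multilinear_def lv using k by auto
  qed
qed

theorem mainTheorem2:
  fixes n :: nat
  assumes "n \<ge> 1"
  shows "(\<forall>b \<in> set (basisU n). multilinear n b)
     \<and> (\<forall>c :: nat \<Rightarrow> 'a::field_char_0.
          lin_comb c (basisU n) \<in> Uideal {1..n} \<longrightarrow> (\<forall>j < length (basisU n). c j = 0))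
     \<and> (\<forall>t. multilinear n t \<longrightarrow>
          (\<exists>c :: nat \<Rightarrow> 'a. pminus (monom t) (lin_comb c (basisU n)) \<in> Uideal {1..n}))"
proof (intro conjI)
  show "\<forall>b \<in> set (basisU n). multilinear n b" using multi_basis assms by blast
next
  show "\<forall>c :: nat \<Rightarrow> 'a::field_char_0.
          lin_comb c (basisU n) \<in> Uideal {1..n} \<longrightarrow> (\<forall>j < length (basisU n). c j = 0)"
  proof (intro allI impI)
    fix c :: "nat \<Rightarrow> 'a" and j
    assume I: "lin_comb c (basisU n) \<in> Uideal {1..n}" and j: "j < length (basisU n)"
    consider "n = 1" | "n = 2" | "n = 3" | "n \<ge> 4" using assms by linarith
    then show "c j = 0"
    proof cases
      case 1
      then have "j = 0" using j unfolding 1 basisU1 by simp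
      then show ?thesis using indep1[of c] I 1 by simp
    next
      case 2
      then have "j = 0 \<or> j = 1" using j by (auto simp: basisU2)
      then show ?thesis using indep2[of c] I 2 by auto
    next
      case 3
      then have "j = 0 \<or> j = 1 \<or> j = 2 \<or> j = 3" using j by (auto simp: basisU3 basis3_def)
      then show ?thesis using indep3[of c] I 3 by auto
    next
      case 4
      then have n123: "n \<noteq> 1" "n \<noteq> 2" "n \<noteq> 3" by auto
      have "length (basisU n) = n" unfolding basis_big[OF n123] by (simp only: length_map length_upt)
      then have "j < n" using j by simp
      then show ?thesis using indep_gen[OF 4 I] by simp
    qed
  qed
next
  show "\<forall>t. multilinear n t \<longrightarrow>
          (\<exists>c :: nat \<Rightarrow> 'a. pminus (monom t) (lin_comb c (basisU n)) \<in> Uideal {1..n})"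
  proof (intro allI impI)
    fix t assume t: "multilinear n t"
    consider "n = 1" | "n = 2" | "n = 3" | "n \<ge> 4" using assms by linarith
    then show "\<exists>c :: nat \<Rightarrow> 'a. pminus (monom t) (lin_comb c (basisU n)) \<in> Uideal {1..n}"
    proof cases
      case 1 then show ?thesis using span1[of t] t by simp
    next
      case 2 then show ?thesis using span2[of t] t by simp
    next
      case 3 then show ?thesis using span3[of t] t by simp
    next
      case 4 then show ?thesis using span_gen[OF 4 t] by simp
    qed
  qed
qed

end
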